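(* Let $(\mathsf C,\mathrm W)$ be a 2-weighted 2-category. Then the interleaving distance $d_{\mathsf C,\mathrm W}$ is an extended pseudometric on the class of objects $\mathsf C_0$.
   Context: A Lawvere 2-weight on a (strict) 2-category $\mathsf C$ is a pair $\mathrm W=(\mathrm W_1,\mathrm W_2)$ of functions $\mathrm W_1$ from 1-morphisms to $\mathbb R_{\ge0}$ and $\mathrm W_2$ from 2-morphisms to $\mathbb R_{\ge0}$ such that $\mathrm W_1(1_A)=0$ for all objects $A$, $\mathrm W_2(1_f)=0$ for all 1-morphisms $f$, $\mathrm W_1(gf)\le\mathrm W_1(g)+\mathrm W_1(f)$ for composable 1-morphisms, and for 2-morphisms $\mathrm W_2(\beta\alpha)\le\mathrm W_2(\beta)+\mathrm W_2(\alpha)$ (vertical composition) and $\mathrm W_2(\gamma\bullet\alpha)\le\mathrm W_2(\gamma)+\mathrm W_2(\alpha)$ (horizontal composition). A 2-weighted 2-category is such a pair $(\mathsf C,\mathrm W)$. For $A,B\in\mathsf C_0$ and $t\ge0$, $A$ and $B$ are $t$-interleaved if there exist 1-morphisms $g:A\to B$, $h:B\to A$ and 2-morphisms $\alpha:1_A\Rightarrow hg$, $\beta:1_B\Rightarrow gh$ with $\max\{\mathrm W_1(g),\mathrm W_1(h),\mathrm W_2(\alpha),\mathrm W_2(\beta)\}\le t$. Then $d_{\mathsf C,\mathrm W}(A,B)=\inf\{t\ge0: A,B\ t\text{-interleaved}\}$, with $\inf\emptyset=\infty$. An extended pseudometric is $[0,\infty]$-valued, zero on the diagonal, symmetric and satisfies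 the triangle inequality. *)

theory Defs
  imports "HOL-Library.Extended_Nonnegative_Real"
begin

text \<open>A strict 2-category, presented with carrier sets of objects, 1-morphisms and
2-morphisms. comp1 g f is the composite of f : A -> B followed by g : B -> C;
vcomp beta alpha is vertical composition (alpha first);
hcomp gamma alpha is horizontal composition with alpha : f => f' (f : A -> B),
gamma : g => g' (g : B -> C), giving gamma . alpha : g f => g' f'.\<close>

record ('o, 'a, 'b) two_cat =
  Ob    :: "'o set"
  Hom1  :: "'a set"
  src1  :: "'a \<Rightarrow> 'o"
  tgt1  :: "'a \<Rightarrow> 'o"
  id1   :: "'o \<Rightarrow> 'a"
  comp1 :: "'a \<Rightarrow> 'a \<Rightarrow> 'a"
  Hom2  :: "'b set"
  src2  :: "'b \<Rightarrow> 'a"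
  tgt2  :: "'b \<Rightarrow> 'a"
  id2   :: "'a \<Rightarrow> 'b"
  vcomp :: "'b \<Rightarrow> 'b \<Rightarrow> 'b"
  hcomp :: "'b \<Rightarrow> 'b \<Rightarrow> 'b"

definition two_category :: "('o, 'a, 'b, 'e) two_cat_scheme \<Rightarrow> bool" where
  "two_category C \<longleftrightarrow>
    \<comment> \<open>underlying 1-category\<close>
    (\<forall>A\<in>Ob C. id1 C A \<in> Hom1 C \<and> src1 C (id1 C A) = A \<and> tgt1 C (id1 C A) = A) \<and>
    (\<forall>f\<in>Hom1 C. src1 C f \<in> Ob C \<and> tgt1 C f \<in> Ob C) \<and>
    (\<forall>f\<in>Hom1 C. \<forall>g\<in>Hom1 C. tgt1 C f = src1 C g \<longrightarrow>
        comp1 C g f \<in> Hom1 C \<and> src1 C (comp1 C g f) = src1 C f \<and> tgt1 C (comp1 C g f) = tgt1 C g) \<and>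
    (\<forall>f\<in>Hom1 C. \<forall>g\<in>Hom1 C. \<forall>h\<in>Hom1 C. tgt1 C f = src1 C g \<longrightarrow> tgt1 C g = src1 C h \<longrightarrow>
        comp1 C h (comp1 C g f) = comp1 C (comp1 C h g) f) \<and>
    (\<forall>f\<in>Hom1 C. comp1 C f (id1 C (src1 C f)) = f \<and> comp1 C (id1 C (tgt1 C f)) f = f) \<and>
    \<comment> \<open>2-morphisms are between parallel 1-morphisms\<close>
    (\<forall>\<alpha>\<in>Hom2 C. src2 C \<alpha> \<in> Hom1 C \<and> tgt2 C \<alpha> \<in> Hom1 C \<and>
        src1 C (src2 C \<alpha>) = src1 C (tgt2 C \<alpha>) \<and> tgt1 C (src2 C \<alpha>) = tgt1 C (tgt2 C \<alpha>)) \<and>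
    \<comment> \<open>vertical structure: each hom is a category\<close>
    (\<forall>f\<in>Hom1 C. id2 C f \<in> Hom2 C \<and> src2 C (id2 C f) = f \<and> tgt2 C (id2 C f) = f) \<and>
    (\<forall>\<alpha>\<in>Hom2 C. \<forall>\<beta>\<in>Hom2 C. tgt2 C \<alpha> = src2 C \<beta> \<longrightarrow>
        vcomp C \<beta> \<alpha> \<in> Hom2 C \<and> src2 C (vcomp C \<beta> \<alpha>) = src2 C \<alpha> \<and> tgt2 C (vcomp C \<beta> \<alpha>) = tgt2 C \<beta>) \<and>
    (\<forall>\<alpha>\<in>Hom2 C. \<forall>\<beta>\<in>Hom2 C. \<forall>\<gamma>\<in>Hom2 C. tgt2 C \<alpha> = src2 C \<beta> \<longrightarrow> tgt2 C \<beta> = src2 C \<gamma> \<longrightarrow>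
        vcomp C \<gamma> (vcomp C \<beta> \<alpha>) = vcomp C (vcomp C \<gamma> \<beta>) \<alpha>) \<and>
    (\<forall>\<alpha>\<in>Hom2 C. vcomp C \<alpha> (id2 C (src2 C \<alpha>)) = \<alpha> \<and> vcomp C (id2 C (tgt2 C \<alpha>)) \<alpha> = \<alpha>) \<and>
    \<comment> \<open>horizontal structure\<close>
    (\<forall>\<alpha>\<in>Hom2 C. \<forall>\<gamma>\<in>Hom2 C. tgt1 C (src2 C \<alpha>) = src1 C (src2 C \<gamma>) \<longrightarrow>
        hcomp C \<gamma> \<alpha> \<in> Hom2 C \<and>
        src2 C (hcomp C \<gamma> \<alpha>) = comp1 C (src2 C \<gamma>) (src2 C \<alpha>) \<and>
        tgt2 C (hcomp C \<gamma> \<alpha>) = comp1 C (tgt2 C \<gamma>) (tgt2 C \<alpha>)) \<and>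
    (\<forall>\<alpha>\<in>Hom2 C. \<forall>\<gamma>\<in>Hom2 C. \<forall>\<delta>\<in>Hom2 C.
        tgt1 C (src2 C \<alpha>) = src1 C (src2 C \<gamma>) \<longrightarrow> tgt1 C (src2 C \<gamma>) = src1 C (src2 C \<delta>) \<longrightarrow>
        hcomp C \<delta> (hcomp C \<gamma> \<alpha>) = hcomp C (hcomp C \<delta> \<gamma>) \<alpha>) \<and>
    (\<forall>\<alpha>\<in>Hom2 C. hcomp C (id2 C (id1 C (tgt1 C (src2 C \<alpha>)))) \<alpha> = \<alpha> \<and>
        hcomp C \<alpha> (id2 C (id1 C (src1 C (src2 C \<alpha>)))) = \<alpha>) \<and>
    (\<forall>f\<in>Hom1 C. \<forall>g\<in>Hom1 C. tgt1 C f = src1 C g \<longrightarrow>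
        hcomp C (id2 C g) (id2 C f) = id2 C (comp1 C g f)) \<and>
    \<comment> \<open>interchange law\<close>
    (\<forall>\<alpha>\<in>Hom2 C. \<forall>\<beta>\<in>Hom2 C. \<forall>\<gamma>\<in>Hom2 C. \<forall>\<delta>\<in>Hom2 C.
        tgt2 C \<alpha> = src2 C \<beta> \<longrightarrow> tgt2 C \<gamma> = src2 C \<delta> \<longrightarrow>
        tgt1 C (src2 C \<alpha>) = src1 C (src2 C \<gamma>) \<longrightarrow>
        hcomp C (vcomp C \<delta> \<gamma>) (vcomp C \<beta> \<alpha>) = vcomp C (hcomp C \<delta> \<beta>) (hcomp C \<gamma> \<alpha>))"

definition lawvere_2weight ::
  "('o, 'a, 'b, 'e) two_cat_scheme \<Rightarrow> ('a \<Rightarrow> real) \<Rightarrow> ('b \<Rightarrow> real) \<Rightarrow> bool" where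
  "lawvere_2weight C W1 W2 \<longleftrightarrow>
    (\<forall>f\<in>Hom1 C. W1 f \<ge> 0) \<and> (\<forall>\<alpha>\<in>Hom2 C. W2 \<alpha> \<ge> 0) \<and>
    (\<forall>A\<in>Ob C. W1 (id1 C A) = 0) \<and>
    (\<forall>f\<in>Hom1 C. W2 (id2 C f) = 0) \<and>
    (\<forall>f\<in>Hom1 C. \<forall>g\<in>Hom1 C. tgt1 C f = src1 C g \<longrightarrow> W1 (comp1 C g f) \<le> W1 g + W1 f) \<and>
    (\<forall>\<alpha>\<in>Hom2 C. \<forall>\<beta>\<in>Hom2 C. tgt2 C \<alpha> = src2 C \<beta> \<longrightarrow> W2 (vcomp C \<beta> \<alpha>) \<le> W2 \<beta> + W2 \<alpha>) \<and>
    (\<forall>\<alpha>\<in>Hom2 C. \<forall>\<gamma>\<in>Hom2 C. tgt1 C (src2 C \<alpha>) = src1 C (src2 C \<gamma>) \<longrightarrow>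
        W2 (hcomp C \<gamma> \<alpha>) \<le> W2 \<gamma> + W2 \<alpha>)"

definition interleaved ::
  "('o, 'a, 'b, 'e) two_cat_scheme \<Rightarrow> ('a \<Rightarrow> real) \<Rightarrow> ('b \<Rightarrow> real) \<Rightarrow> 'o \<Rightarrow> 'o \<Rightarrow> real \<Rightarrow> bool" where
  "interleaved C W1 W2 A B t \<longleftrightarrow>
    (\<exists>g h \<alpha> \<beta>. g \<in> Hom1 C \<and> src1 C g = A \<and> tgt1 C g = B \<and>
               h \<in> Hom1 C \<and> src1 C h = B \<and> tgt1 C h = A \<and>
               \<alpha> \<in> Hom2 C \<and> src2 C \<alpha> = id1 C A \<and> tgt2 C \<alpha> = comp1 C h g \<and>
               \<beta> \<in> Hom2 C \<and> src2 C \<beta> = id1 C B \<and> tgt2 C \<beta> = comp1 C g h \<and>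
               max (max (W1 g) (W1 h)) (max (W2 \<alpha>) (W2 \<beta>)) \<le> t)"

text \<open>Interleaving distance, valued in [0,\<infinity>] (ennreal); Inf of the empty set is \<infinity>.\<close>

definition interleaving_dist ::
  "('o, 'a, 'b, 'e) two_cat_scheme \<Rightarrow> ('a \<Rightarrow> real) \<Rightarrow> ('b \<Rightarrow> real) \<Rightarrow> 'o \<Rightarrow> 'o \<Rightarrow> ennreal" where
  "interleaving_dist C W1 W2 A B = Inf {ennreal t | t. t \<ge> 0 \<and> interleaved C W1 W2 A B t}"

definition extended_pseudometric :: "'o set \<Rightarrow> ('o \<Rightarrow> 'o \<Rightarrow> ennreal) \<Rightarrow> bool" where
  "extended_pseudometric S d \<longleftrightarrow>
    (\<forall>x\<in>S. d x x = 0) \<and>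
    (\<forall>x\<in>S. \<forall>y\<in>S. d x y = d y x) \<and>
    (\<forall>x\<in>S. \<forall>y\<in>S. \<forall>z\<in>S. d x z \<le> d x y + d y z)"

end

theory Submission
  imports Defs
begin

lemma Inf_add_const_ennreal:
  fixes S :: "ennreal set"
  assumes "S \<noteq> {}"
  shows "Inf ((\<lambda>x. x + c) ` S) = Inf S + c"
proof -
  have "mono (\<lambda>x::ennreal. x + c)" by (auto simp: mono_def add_right_mono)
  moreover have "continuous (at_right (Inf S)) (\<lambda>x::ennreal. x + c)"
    by (intro continuous_add continuous_ident continuous_const)
  ultimately show ?thesis
    using continuous_at_Inf_mono[of "\<lambda>x. x + c" S] assms by auto
qed

lemma Inf_sum_le_ennreal:
  fixes S T U :: "ennreal set"
  assumes "\<And>s t. s \<in> S \<Longrightarrow> t \<in> T \<Longrightarrow> Inf U \<le> s + t"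
  shows "Inf U \<le> Inf S + Inf T"
proof (cases "S = {} \<or> T = {}")
  case True then show ?thesis by auto
next
  case False
  have "\<And>s. s \<in> S \<Longrightarrow> Inf U \<le> s + Inf T"
  proof -
    fix s assume s: "s \<in> S"
    have "Inf U \<le> Inf ((\<lambda>t. t + s) ` T)"
    proof (rule Inf_greatest)
      fix y assume "y \<in> (\<lambda>t. t + s) ` T"
      then obtain t where t: "t \<in> T" "y = t + s" by auto
      show "Inf U \<le> y" using assms[OF s t(1)] t(2) by (simp add: add.commute)
    qed
    also have "\<dots> = Inf T + s" using False Inf_add_const_ennreal by blast
    finally show "Inf U \<le> s + Inf T" by (simp add: add.commute)
  qed
  then have "Inf U \<le> Inf ((\<lambda>s. s + Inf T) ` S)" by (auto intro!: Inf_greatest)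
  also have "\<dots> = Inf S + Inf T" using False Inf_add_const_ennreal by blast
  finally show ?thesis .
qed


context
  fixes C :: "('o, 'a, 'b, 'e) two_cat_scheme"
  assumes C: "two_category C"
begin
lemma tc_id1: "A \<in> Ob C \<Longrightarrow> id1 C A \<in> Hom1 C \<and> src1 C (id1 C A) = A \<and> tgt1 C (id1 C A) = A"
  using C[unfolded two_category_def, THEN conjunct1] by blast
lemma tc_ob: "f \<in> Hom1 C \<Longrightarrow> src1 C f \<in> Ob C \<and> tgt1 C f \<in> Ob C"
  using C[unfolded two_category_def, THEN conjunct2, THEN conjunct1] by blast
lemma tc_comp1: "f \<in> Hom1 C \<Longrightarrow> g \<in> Hom1 C \<Longrightarrow> tgt1 C f = src1 C g \<Longrightarrow>
        comp1 C g f \<in> Hom1 C \<and> src1 C (comp1 C g f) = src1 C f \<and> tgt1 C (comp1 C g f) = tgt1 C g"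
  using C[unfolded two_category_def, THEN conjunct2, THEN conjunct2, THEN conjunct1] by blast
lemma tc_assoc: "f \<in> Hom1 C \<Longrightarrow> g \<in> Hom1 C \<Longrightarrow> h \<in> Hom1 C \<Longrightarrow> tgt1 C f = src1 C g \<Longrightarrow> tgt1 C g = src1 C h \<Longrightarrow>
        comp1 C h (comp1 C g f) = comp1 C (comp1 C h g) f"
  using C[unfolded two_category_def, THEN conjunct2, THEN conjunct2, THEN conjunct2, THEN conjunct1] by blast
lemma tc_unit: "f \<in> Hom1 C \<Longrightarrow> comp1 C f (id1 C (src1 C f)) = f \<and> comp1 C (id1 C (tgt1 C f)) f = f"
  using C[unfolded two_category_def, THEN conjunct2, THEN conjunct2, THEN conjunct2, THEN conjunct2, THEN conjunct1] by blast
lemma tc_par: "\<alpha> \<in> Hom2 C \<Longrightarrow> src2 C \<alpha> \<in> Hom1 C \<and> tgt2 C \<alpha> \<in> Hom1 C \<and>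
        src1 C (src2 C \<alpha>) = src1 C (tgt2 C \<alpha>) \<and> tgt1 C (src2 C \<alpha>) = tgt1 C (tgt2 C \<alpha>)"
  using C[unfolded two_category_def, THEN conjunct2, THEN conjunct2, THEN conjunct2, THEN conjunct2, THEN conjunct2, THEN conjunct1] by blast
lemma tc_id2: "f \<in> Hom1 C \<Longrightarrow> id2 C f \<in> Hom2 C \<and> src2 C (id2 C f) = f \<and> tgt2 C (id2 C f) = f"
  using C[unfolded two_category_def, THEN conjunct2, THEN conjunct2, THEN conjunct2, THEN conjunct2, THEN conjunct2, THEN conjunct2, THEN conjunct1] by blast
lemma tc_vcomp: "\<alpha> \<in> Hom2 C \<Longrightarrow> \<beta> \<in> Hom2 C \<Longrightarrow> tgt2 C \<alpha> = src2 C \<beta> \<Longrightarrow>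
        vcomp C \<beta> \<alpha> \<in> Hom2 C \<and> src2 C (vcomp C \<beta> \<alpha>) = src2 C \<alpha> \<and> tgt2 C (vcomp C \<beta> \<alpha>) = tgt2 C \<beta>"
  using C[unfolded two_category_def, THEN conjunct2, THEN conjunct2, THEN conjunct2, THEN conjunct2, THEN conjunct2, THEN conjunct2, THEN conjunct2, THEN conjunct1] by blast
lemma tc_hcomp: "\<alpha> \<in> Hom2 C \<Longrightarrow> \<gamma> \<in> Hom2 C \<Longrightarrow> tgt1 C (src2 C \<alpha>) = src1 C (src2 C \<gamma>) \<Longrightarrow>
        hcomp C \<gamma> \<alpha> \<in> Hom2 C \<and>
        src2 C (hcomp C \<gamma> \<alpha>) = comp1 C (src2 C \<gamma>) (src2 C \<alpha>) \<and>
        tgt2 C (hcomp C \<gamma> \<alpha>) = comp1 C (tgt2 C \<gamma>) (tgt2 C \<alpha>)"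
  using C[unfolded two_category_def, THEN conjunct2, THEN conjunct2, THEN conjunct2, THEN conjunct2, THEN conjunct2, THEN conjunct2, THEN conjunct2, THEN conjunct2, THEN conjunct2, THEN conjunct2, THEN conjunct1] by blast
end

lemma lw_facts:
  assumes "lawvere_2weight C W1 W2"
  shows "A \<in> Ob C \<Longrightarrow> W1 (id1 C A) = 0"
    and "f \<in> Hom1 C \<Longrightarrow> W2 (id2 C f) = 0"
    and "f \<in> Hom1 C \<Longrightarrow> g \<in> Hom1 C \<Longrightarrow> tgt1 C f = src1 C g \<Longrightarrow> W1 (comp1 C g f) \<le> W1 g + W1 f"
    and "\<alpha> \<in> Hom2 C \<Longrightarrow> \<beta> \<in> Hom2 C \<Longrightarrow> tgt2 C \<alpha> = src2 C \<beta> \<Longrightarrow> W2 (vcomp C \<beta> \<alpha>) \<le> W2 \<beta> + W2 \<alpha>"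
    and "\<alpha> \<in> Hom2 C \<Longrightarrow> \<gamma> \<in> Hom2 C \<Longrightarrow> tgt1 C (src2 C \<alpha>) = src1 C (src2 C \<gamma>) \<Longrightarrow>
        W2 (hcomp C \<gamma> \<alpha>) \<le> W2 \<gamma> + W2 \<alpha>"
  using assms unfolding lawvere_2weight_def by blast+

lemma interleaved_refl:
  assumes C: "two_category C" and W: "lawvere_2weight C W1 W2" and A: "A \<in> Ob C"
  shows "interleaved C W1 W2 A A 0"
proof -
  have i: "id1 C A \<in> Hom1 C" "src1 C (id1 C A) = A" "tgt1 C (id1 C A) = A"
    using tc_id1[OF C A] by auto
  have c: "comp1 C (id1 C A) (id1 C A) = id1 C A"
    using tc_unit[OF C i(1)] i by simp
  have j: "id2 C (id1 C A) \<in> Hom2 C" "src2 C (id2 C (id1 C A)) = id1 C A"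
    "tgt2 C (id2 C (id1 C A)) = id1 C A"
    using tc_id2[OF C i(1)] by auto
  have w: "W1 (id1 C A) = 0" "W2 (id2 C (id1 C A)) = 0"
    using lw_facts[OF W] A i by auto
  show ?thesis unfolding interleaved_def
    by (rule exI[of _ "id1 C A"], rule exI[of _ "id1 C A"],
        rule exI[of _ "id2 C (id1 C A)"], rule exI[of _ "id2 C (id1 C A)"])
      (simp add: i c j w)
qed

lemma interleaved_sym:
  "interleaved C W1 W2 A B t \<Longrightarrow> interleaved C W1 W2 B A t"
  unfolding interleaved_def by (metis max.commute)

lemma whisk:
  assumes C: "two_category C" and W: "lawvere_2weight C W1 W2"
    and that: "x \<in> Hom1 C" "z \<in> Hom1 C" "\<gamma> \<in> Hom2 C" "src2 C \<gamma> = X" "tgt2 C \<gamma> = Y"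
      "tgt1 C x = src1 C X" "tgt1 C X = src1 C z"
  shows "\<exists>\<gamma>'. \<gamma>' \<in> Hom2 C \<and> src2 C \<gamma>' = comp1 C z (comp1 C X x)
      \<and> tgt2 C \<gamma>' = comp1 C z (comp1 C Y x) \<and> W2 \<gamma>' \<le> W2 \<gamma>"
proof -
  have X: "X \<in> Hom1 C" "Y \<in> Hom1 C" "src1 C X = src1 C Y" "tgt1 C X = tgt1 C Y"
    using tc_par[OF C that(3)] that by auto
  have ix: "id2 C x \<in> Hom2 C" "src2 C (id2 C x) = x" "tgt2 C (id2 C x) = x"
    using tc_id2[OF C that(1)] by auto
  have iz: "id2 C z \<in> Hom2 C" "src2 C (id2 C z) = z" "tgt2 C (id2 C z) = z"
    using tc_id2[OF C that(2)] by auto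
  define e where "e = hcomp C \<gamma> (id2 C x)"
  have e: "e \<in> Hom2 C" "src2 C e = comp1 C X x" "tgt2 C e = comp1 C Y x"
    using tc_hcomp[OF C ix(1) that(3)] ix that unfolding e_def by auto
  have se: "tgt1 C (comp1 C X x) = tgt1 C X"
    using tc_comp1[OF C that(1) X(1)] that by auto
  define e2 where "e2 = hcomp C (id2 C z) e"
  have e2: "e2 \<in> Hom2 C" "src2 C e2 = comp1 C z (comp1 C X x)"
      "tgt2 C e2 = comp1 C z (comp1 C Y x)"
    using tc_hcomp[OF C e(1) iz(1)] iz e se that unfolding e2_def by auto
  have "W2 e \<le> W2 \<gamma> + W2 (id2 C x)" using lw_facts(5)[OF W ix(1) that(3)] ix that unfolding e_def by auto
  also have "W2 (id2 C x) = 0" using lw_facts(2)[OF W that(1)] .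
  finally have we: "W2 e \<le> W2 \<gamma>" by simp
  have "W2 e2 \<le> W2 (id2 C z) + W2 e" using lw_facts(5)[OF W e(1) iz(1)] iz e se that unfolding e2_def by auto
  also have "W2 (id2 C z) = 0" using lw_facts(2)[OF W that(2)] .
  finally have "W2 e2 \<le> W2 \<gamma>" using we by simp
  then show ?thesis using e2 by blast
qed

lemma interleaved_trans:
  assumes C: "two_category C" and W: "lawvere_2weight C W1 W2"
    and AB: "interleaved C W1 W2 A B s" and BD: "interleaved C W1 W2 B D t"
  shows "interleaved C W1 W2 A D (s + t)"
proof -
  obtain g h \<alpha> \<beta> where g: "g \<in> Hom1 C" "src1 C g = A" "tgt1 C g = B"
    and h: "h \<in> Hom1 C" "src1 C h = B" "tgt1 C h = A"
    and a: "\<alpha> \<in> Hom2 C" "src2 C \<alpha> = id1 C A" "tgt2 C \<alpha> = comp1 C h g"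
    and b: "\<beta> \<in> Hom2 C" "src2 C \<beta> = id1 C B" "tgt2 C \<beta> = comp1 C g h"
    and m: "max (max (W1 g) (W1 h)) (max (W2 \<alpha>) (W2 \<beta>)) \<le> s"
    using AB unfolding interleaved_def by blast
  obtain g' h' \<alpha>' \<beta>' where g': "g' \<in> Hom1 C" "src1 C g' = B" "tgt1 C g' = D"
    and h': "h' \<in> Hom1 C" "src1 C h' = D" "tgt1 C h' = B"
    and a': "\<alpha>' \<in> Hom2 C" "src2 C \<alpha>' = id1 C B" "tgt2 C \<alpha>' = comp1 C h' g'"
    and b': "\<beta>' \<in> Hom2 C" "src2 C \<beta>' = id1 C D" "tgt2 C \<beta>' = comp1 C g' h'"
    and m': "max (max (W1 g') (W1 h')) (max (W2 \<alpha>') (W2 \<beta>')) \<le> t"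
    using BD unfolding interleaved_def by blast
  have ObB: "B \<in> Ob C" using tc_ob[OF C g(1)] g by auto
  have iB: "id1 C B \<in> Hom1 C" "src1 C (id1 C B) = B" "tgt1 C (id1 C B) = B"
    using tc_id1[OF C ObB] by auto
  define G where "G = comp1 C g' g"
  define H where "H = comp1 C h h'"
  have G: "G \<in> Hom1 C" "src1 C G = A" "tgt1 C G = D"
    using tc_comp1[OF C g(1) g'(1)] g g' unfolding G_def by auto
  have H: "H \<in> Hom1 C" "src1 C H = D" "tgt1 C H = A"
    using tc_comp1[OF C h'(1) h(1)] h h' unfolding H_def by auto
  have WG: "W1 G \<le> s + t" using lw_facts(3)[OF W g(1) g'(1)] g g' m m' unfolding G_def by auto
  have WH: "W1 H \<le> s + t" using lw_facts(3)[OF W h'(1) h(1)] h h' m m' unfolding H_def by auto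
  have hg: "comp1 C h' g' \<in> Hom1 C" using tc_comp1[OF C g'(1) h'(1)] g' h' by auto
  have gh: "comp1 C g h \<in> Hom1 C" using tc_comp1[OF C h(1) g(1)] g h by auto
  obtain \<gamma> where \<gamma>: "\<gamma> \<in> Hom2 C" "src2 C \<gamma> = comp1 C h (comp1 C (id1 C B) g)"
      "tgt2 C \<gamma> = comp1 C h (comp1 C (comp1 C h' g') g)" "W2 \<gamma> \<le> W2 \<alpha>'"
    using whisk[OF C W g(1) h(1) a'(1), of "id1 C B" "comp1 C h' g'"] a' g h iB by auto
  have s\<gamma>: "src2 C \<gamma> = comp1 C h g" using \<gamma>(2) tc_unit[OF C g(1)] g by simp
  have t\<gamma>: "tgt2 C \<gamma> = comp1 C H G"
  proof -
    have "comp1 C (comp1 C h' g') g = comp1 C h' G"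
      unfolding G_def using tc_assoc[OF C g(1) g'(1) h'(1)] g g' h' by simp
    moreover have "comp1 C h (comp1 C h' G) = comp1 C H G"
      unfolding H_def using tc_assoc[OF C G(1) h'(1) h(1)] G h h' by simp
    ultimately show ?thesis using \<gamma>(3) by simp
  qed
  define A2 where "A2 = vcomp C \<gamma> \<alpha>"
  have A2: "A2 \<in> Hom2 C" "src2 C A2 = id1 C A" "tgt2 C A2 = comp1 C H G"
    using tc_vcomp[OF C a(1) \<gamma>(1)] a \<gamma> s\<gamma> t\<gamma> unfolding A2_def by auto
  have WA2: "W2 A2 \<le> s + t"
    using lw_facts(4)[OF W a(1) \<gamma>(1)] a \<gamma> s\<gamma> m m' unfolding A2_def by auto
  obtain \<delta> where \<delta>: "\<delta> \<in> Hom2 C" "src2 C \<delta> = comp1 C g' (comp1 C (id1 C B) h')"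
      "tgt2 C \<delta> = comp1 C g' (comp1 C (comp1 C g h) h')" "W2 \<delta> \<le> W2 \<beta>"
    using whisk[OF C W h'(1) g'(1) b(1), of "id1 C B" "comp1 C g h"] b g' h' iB by auto
  have s\<delta>: "src2 C \<delta> = comp1 C g' h'" using \<delta>(2) tc_unit[OF C h'(1)] h' by simp
  have t\<delta>: "tgt2 C \<delta> = comp1 C G H"
  proof -
    have "comp1 C (comp1 C g h) h' = comp1 C g H"
      unfolding H_def using tc_assoc[OF C h'(1) h(1) g(1)] g h h' by simp
    moreover have "comp1 C g' (comp1 C g H) = comp1 C G H"
      unfolding G_def using tc_assoc[OF C H(1) g(1) g'(1)] H g g' by simp
    ultimately show ?thesis using \<delta>(3) by simp
  qed
  define B2 where "B2 = vcomp C \<delta> \<beta>'"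
  have B2: "B2 \<in> Hom2 C" "src2 C B2 = id1 C D" "tgt2 C B2 = comp1 C G H"
    using tc_vcomp[OF C b'(1) \<delta>(1)] b' \<delta> s\<delta> t\<delta> unfolding B2_def by auto
  have WB2: "W2 B2 \<le> s + t"
    using lw_facts(4)[OF W b'(1) \<delta>(1)] b' \<delta> s\<delta> m m' unfolding B2_def by auto
  show ?thesis unfolding interleaved_def
    using G H A2 B2 WG WH WA2 WB2 by (intro exI[of _ G] exI[of _ H] exI[of _ A2] exI[of _ B2]) auto
qed

theorem theorem5p3:
  fixes C :: "('o, 'a, 'b, 'e) two_cat_scheme"
    and W1 :: "'a \<Rightarrow> real" and W2 :: "'b \<Rightarrow> real"
  assumes "two_category C"
    and "lawvere_2weight C W1 W2"
  shows "extended_pseudometric (Ob C) (interleaving_dist C W1 W2)"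
  unfolding extended_pseudometric_def
proof (intro conjI ballI)
  fix x assume x: "x \<in> Ob C"
  have "interleaved C W1 W2 x x 0" using interleaved_refl[OF assms x] .
  then have "ennreal 0 \<in> {ennreal t | t. t \<ge> 0 \<and> interleaved C W1 W2 x x t}" by blast
  then have "Inf {ennreal t | t. t \<ge> 0 \<and> interleaved C W1 W2 x x t} \<le> ennreal 0"
    by (rule Inf_lower)
  then show "interleaving_dist C W1 W2 x x = 0"
    unfolding interleaving_dist_def by simp
next
  fix x y
  show "interleaving_dist C W1 W2 x y = interleaving_dist C W1 W2 y x"
  proof -
    have "{ennreal t |t. 0 \<le> t \<and> interleaved C W1 W2 x y t} = {ennreal t |t. 0 \<le> t \<and> interleaved C W1 W2 y x t}"
      using interleaved_sym[of C W1 W2 x y] interleaved_sym[of C W1 W2 y x] by blast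
    then show ?thesis unfolding interleaving_dist_def by simp
  qed
next
  fix x y z
  show "interleaving_dist C W1 W2 x z \<le> interleaving_dist C W1 W2 x y + interleaving_dist C W1 W2 y z"
    unfolding interleaving_dist_def
  proof (rule Inf_sum_le_ennreal)
    fix s t assume "s \<in> {ennreal t |t. 0 \<le> t \<and> interleaved C W1 W2 x y t}"
      "t \<in> {ennreal t |t. 0 \<le> t \<and> interleaved C W1 W2 y z t}"
    then obtain a b where ab: "s = ennreal a" "t = ennreal b" "a \<ge> 0" "b \<ge> 0"
      "interleaved C W1 W2 x y a" "interleaved C W1 W2 y z b" by blast
    have xz: "interleaved C W1 W2 x z (a + b)" using interleaved_trans[OF assms ab(5) ab(6)] .
    have ab0: "0 \<le> a + b" using ab by simp
    have "ennreal (a + b) \<in> {ennreal t |t. 0 \<le> t \<and> interleaved C W1 W2 x z t}"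
      by (rule CollectI, rule exI[of _ "a + b"], intro conjI refl ab0 xz)
    then show "Inf {ennreal t |t. 0 \<le> t \<and> interleaved C W1 W2 x z t} \<le> s + t"
    proof -
      have "Inf {ennreal t |t. 0 \<le> t \<and> interleaved C W1 W2 x z t} \<le> ennreal (a + b)"
        by (rule Inf_lower) fact
      also have "ennreal (a + b) = s + t" using ab ennreal_plus[OF ab(3) ab(4)] by simp
      finally show ?thesis .
    qed
  qed
qed

end
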